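(* Let $S$ be a string of length $n$ and $\tau,k$ positive integers. Given random access to the sorted list of starting positions of the occurrences in $S$ of an aperiodic substring $P$ of $S$, together with the number of these occurrences, one can check whether $P$ is $(\tau,k)$-resilient in $S$ in $\mathcal{O}(\tau+k)$ time.
   Context: An integer $p>0$ is a period of $P$ if $P[t]=P[t+p]$ for all $t\in[0,|P|-p)$; $\mathsf{per}(P)$ is the smallest period; $P$ is aperiodic if $\mathsf{per}(P)>|P|/2$. Here, a substring $P$ of $S$ is $(\tau,k)$-resilient in $S$ if $P$ occurs at least $\tau$ times in every string obtained from $S$ by replacing the letters at at most $k$ positions with a letter $\#$ not in the alphabet of $S$. *)

theory Defs
  imports Main "HOL-Library.Sublist"
begin

definition is_period :: "'a list \<Rightarrow> nat \<Rightarrow> bool" where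
  "is_period P p \<longleftrightarrow> p > 0 \<and> (\<forall>t. t + p < length P \<longrightarrow> P ! t = P ! (t + p))"

definition per :: "'a list \<Rightarrow> nat" where
  "per P = (LEAST p. is_period P p)"

definition aperiodic :: "'a list \<Rightarrow> bool" where
  "aperiodic P \<longleftrightarrow> 2 * per P > length P"

definition occs :: "'a list \<Rightarrow> 'a list \<Rightarrow> nat set" where
  "occs S P = {i. i + length P \<le> length S \<and> take (length P) (drop i S) = P}"

text \<open>Replacing the letters at positions D by a fresh letter; the fresh letter is None.\<close>
definition mask :: "'a list \<Rightarrow> nat set \<Rightarrow> 'a option list" where
  "mask S D = map (\<lambda>i. if i \<in> D then None else Some (S ! i)) [0..<length S]"

definition resilient :: "nat \<Rightarrow> nat \<Rightarrow> 'a list \<Rightarrow> 'a list \<Rightarrow> bool" where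
  "resilient \<tau> k S P \<longleftrightarrow>
     (\<forall>D. D \<subseteq> {0..<length S} \<and> card D \<le> k \<longrightarrow>
        card (occs (mask S D) (map Some P)) \<ge> \<tau>)"

datatype instr =
    LoadC nat nat
  | Add nat nat nat
  | Sub nat nat nat
  | ReadIn nat nat
  | LoadI nat nat
  | StoreI nat nat
  | JumpLe nat nat nat
  | Halt

type_synonym config = "nat \<times> (nat \<Rightarrow> nat)"

definition rd :: "nat list \<Rightarrow> nat \<Rightarrow> nat" where
  "rd A i = (if i < length A then A ! i else 0)"

fun exec :: "instr \<Rightarrow> nat list \<Rightarrow> config \<Rightarrow> config" where
  "exec (LoadC r c) A (pc, R) = (Suc pc, R(r := c))"
| "exec (Add r a b) A (pc, R) = (Suc pc, R(r := R a + R b))"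
| "exec (Sub r a b) A (pc, R) = (Suc pc, R(r := R a - R b))"
| "exec (ReadIn r j) A (pc, R) = (Suc pc, R(r := rd A (R j)))"
| "exec (LoadI r j) A (pc, R) = (Suc pc, R(r := R (R j)))"
| "exec (StoreI i j) A (pc, R) = (Suc pc, R(R i := R j))"
| "exec (JumpLe a b l) A (pc, R) = (if R a \<le> R b then (l, R) else (Suc pc, R))"
| "exec Halt A (pc, R) = (pc, R)"

definition halted :: "instr list \<Rightarrow> config \<Rightarrow> bool" where
  "halted prog cfg \<longleftrightarrow> fst cfg \<ge> length prog \<or> prog ! fst cfg = Halt"

definition step :: "instr list \<Rightarrow> nat list \<Rightarrow> config \<Rightarrow> config" where
  "step prog A cfg = (if halted prog cfg then cfg else exec (prog ! fst cfg) A cfg)"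

definition run :: "instr list \<Rightarrow> nat list \<Rightarrow> nat \<Rightarrow> config \<Rightarrow> config" where
  "run prog A t cfg = (step prog A ^^ t) cfg"

text \<open>Initial configuration: R0 = tau, R1 = k, R2 = |P|, R3 = number of occurrences,
  R4 = n = |S|; all other registers 0.  Output: R0 = 1 means "yes".\<close>
definition init :: "nat \<Rightarrow> nat \<Rightarrow> nat \<Rightarrow> nat \<Rightarrow> nat \<Rightarrow> config" where
  "init \<tau> k m occ n = (0, (\<lambda>_. 0)(0 := \<tau>, 1 := k, 2 := m, 3 := occ, 4 := n))"

end

theory Submission
  imports Defs
begin

definition prog :: "instr list" where
"prog = [JumpLe 2 5 28, Add 6 0 1, Add 6 6 1, JumpLe 6 3 26, LoadC 9 1,
  Add 10 7 9, JumpLe 3 10 17, ReadIn 11 7, ReadIn 12 10, Add 11 11 2, Add 12 12 9,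
  JumpLe 12 11 14, Add 7 7 9, JumpLe 5 5 5,
  Add 8 8 9, Add 7 10 9, JumpLe 5 5 5,
  JumpLe 1 8 20, Add 13 8 5, JumpLe 5 5 21, Add 13 1 5, Add 13 13 1, Add 13 13 0,
  JumpLe 13 3 26, LoadC 0 0, Halt, LoadC 0 1, Halt, JumpLe 0 3 26, JumpLe 5 5 24]"

lemma run_0[simp]: "run p A 0 c = c" by (simp add: run_def)
lemma run_Suc: "run p A (Suc t) c = run p A t (step p A c)"
  unfolding run_def funpow_Suc_right by simp
lemma run_add: "run p A (a + b) c = run p A b (run p A a c)"
  unfolding run_def by (metis add.commute comp_apply funpow_add)

lemma run_num: "run p A (numeral n) c = run p A (pred_numeral n) (step p A c)"
  by (simp add: numeral_eq_Suc run_Suc)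
lemma s0: "step prog A (0, R) = (if R 2 \<le> R 5 then 28 else 1, R)"
  by (simp add: step_def halted_def prog_def)
lemma s1: "step prog A (1, R) = (2, R(6 := R 0 + R 1))"
  by (simp add: step_def halted_def prog_def)
lemma s2: "step prog A (2, R) = (3, R(6 := R 6 + R 1))"
  by (simp add: step_def halted_def prog_def)
lemma s3: "step prog A (3, R) = (if R 6 \<le> R 3 then 26 else 4, R)"
  by (simp add: step_def halted_def prog_def)
lemma s4: "step prog A (4, R) = (5, R(9 := 1))"
  by (simp add: step_def halted_def prog_def)
lemma s5: "step prog A (5, R) = (6, R(10 := R 7 + R 9))"
  by (simp add: step_def halted_def prog_def)
lemma s6: "step prog A (6, R) = (if R 3 \<le> R 10 then 17 else 7, R)"
  by (simp add: step_def halted_def prog_def)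
lemma s7: "step prog A (7, R) = (8, R(11 := rd A (R 7)))"
  by (simp add: step_def halted_def prog_def)
lemma s8: "step prog A (8, R) = (9, R(12 := rd A (R 10)))"
  by (simp add: step_def halted_def prog_def)
lemma s9: "step prog A (9, R) = (10, R(11 := R 11 + R 2))"
  by (simp add: step_def halted_def prog_def)
lemma s10: "step prog A (10, R) = (11, R(12 := R 12 + R 9))"
  by (simp add: step_def halted_def prog_def)
lemma s11: "step prog A (11, R) = (if R 12 \<le> R 11 then 14 else 12, R)"
  by (simp add: step_def halted_def prog_def)
lemma s12: "step prog A (12, R) = (13, R(7 := R 7 + R 9))"
  by (simp add: step_def halted_def prog_def)
lemma s13: "step prog A (13, R) = (5, R)"
  by (simp add: step_def halted_def prog_def)
lemma s14: "step prog A (14, R) = (15, R(8 := R 8 + R 9))"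
  by (simp add: step_def halted_def prog_def)
lemma s15: "step prog A (15, R) = (16, R(7 := R 10 + R 9))"
  by (simp add: step_def halted_def prog_def)
lemma s16: "step prog A (16, R) = (5, R)"
  by (simp add: step_def halted_def prog_def)
lemma s17: "step prog A (17, R) = (if R 1 \<le> R 8 then 20 else 18, R)"
  by (simp add: step_def halted_def prog_def)
lemma s18: "step prog A (18, R) = (19, R(13 := R 8 + R 5))"
  by (simp add: step_def halted_def prog_def)
lemma s19: "step prog A (19, R) = (21, R)"
  by (simp add: step_def halted_def prog_def)
lemma s20: "step prog A (20, R) = (21, R(13 := R 1 + R 5))"
  by (simp add: step_def halted_def prog_def)
lemma s21: "step prog A (21, R) = (22, R(13 := R 13 + R 1))"
  by (simp add: step_def halted_def prog_def)
lemma s22: "step prog A (22, R) = (23, R(13 := R 13 + R 0))"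
  by (simp add: step_def halted_def prog_def)
lemma s23: "step prog A (23, R) = (if R 13 \<le> R 3 then 26 else 24, R)"
  by (simp add: step_def halted_def prog_def)
lemma s24: "step prog A (24, R) = (25, R(0 := 0))"
  by (simp add: step_def halted_def prog_def)
lemma s25: "step prog A (25, R) = (25, R)"
  by (simp add: step_def halted_def prog_def)
lemma s26: "step prog A (26, R) = (27, R(0 := 1))"
  by (simp add: step_def halted_def prog_def)
lemma s27: "step prog A (27, R) = (27, R)"
  by (simp add: step_def halted_def prog_def)
lemma s28: "step prog A (28, R) = (if R 0 \<le> R 3 then 26 else 29, R)"
  by (simp add: step_def halted_def prog_def)
lemma s29: "step prog A (29, R) = (24, R)"
  by (simp add: step_def halted_def prog_def)
lemma s1s: "step prog A (Suc 0, R) = (2, R(6 := R 0 + R 1))" using s1 by simp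
lemmas steps = s1s s0 s1 s2 s3 s4 s5 s6 s7 s8 s9 s10 s11 s12 s13 s14 s15 s16 s17 s18 s19 s20 s21 s22 s23 s24 s25 s26 s27 s28 s29
lemma h25: "halted prog (25, R)" and h27: "halted prog (27, R)" by (simp_all add: halted_def prog_def)




function greedy :: "nat list \<Rightarrow> nat \<Rightarrow> nat \<Rightarrow> nat" where
"greedy A m j = (if Suc j < length A then (if A!(Suc j) < A!j + m then Suc (greedy A m (j+2)) else greedy A m (Suc j)) else 0)"
  by pat_completeness auto
termination by (relation "measure (\<lambda>(A,m,j). length A - j)") auto

declare greedy.simps[simp del]

lemma loop:
  "length A = q \<Longrightarrow> R 0 = \<tau> \<Longrightarrow> R 1 = k \<Longrightarrow> R 2 = m \<Longrightarrow> R 3 = q \<Longrightarrow> R 5 = 0 \<Longrightarrow> R 9 = 1 \<Longrightarrow> R 7 = j \<Longrightarrow>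
   \<exists>t \<le> 10*(q-j) + 12. halted prog (run prog A t (5,R)) \<and>
     (snd (run prog A t (5,R)) 0 = 1 \<longleftrightarrow> \<tau> + k + min k (R 8 + greedy A m j) \<le> q)"
proof (induction A m j arbitrary: R rule: greedy.induct)
  case (1 A m j)
  show ?case
  proof (cases "Suc j < q")
    case False
    have g: "greedy A m j = 0" using False 1 by (subst greedy.simps) simp
    have "halted prog (run prog A 9 (5,R)) \<and>
     (snd (run prog A 9 (5,R)) 0 = 1 \<longleftrightarrow> \<tau> + k + min k (R 8) \<le> q)"
      using False 1 by (simp add: run_num run_Suc steps h25 h27)
    then show ?thesis using g by (intro exI[of _ 9]) simp
  next
    case True
    show ?thesis
    proof (cases "A!(Suc j) < A!j + m")
      case e: True
      have g: "greedy A m j = Suc (greedy A m (j+2))" using True e 1 by (subst greedy.simps) simp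
      define R' where "R' = snd (run prog A 10 (5, R))"
      have r: "run prog A 10 (5, R) = (5, R')" and r8: "R' 8 = Suc (R 8)" and r7: "R' 7 = Suc (Suc j)"
        and rr: "\<forall>i\<in>{0,1,2,3,5,9}. R' i = R i"
        using True e 1 unfolding R'_def
        by (simp_all add: run_num run_Suc steps rd_def)
      have "\<exists>t \<le> 10*(q-(j+2)) + 12. halted prog (run prog A t (5,R')) \<and>
        (snd (run prog A t (5,R')) 0 = 1 \<longleftrightarrow> \<tau> + k + min k (R' 8 + greedy A m (j+2)) \<le> q)"
        apply (rule 1(1)[OF _ e])
        using True 1 r7 rr by simp_all
      then obtain t where t: "t \<le> 10*(q-(j+2)) + 12" "halted prog (run prog A t (5,R'))"
        "(snd (run prog A t (5,R')) 0 = 1 \<longleftrightarrow> \<tau> + k + min k (R' 8 + greedy A m (j+2)) \<le> q)"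
        by blast
      show ?thesis
        apply (intro exI[of _ "10 + t"])
        using t True g r r8 unfolding run_add by simp
    next
      case e: False
      have g: "greedy A m j = greedy A m (Suc j)" using True e 1 by (subst greedy.simps) simp
      define R' where "R' = snd (run prog A 9 (5, R))"
      have r: "run prog A 9 (5, R) = (5, R')" and r8: "R' 8 = R 8" and r7: "R' 7 = Suc j"
        and rr: "\<forall>i\<in>{0,1,2,3,5,9}. R' i = R i"
        using True e 1 unfolding R'_def
        by (simp_all add: run_num run_Suc steps rd_def)
      have "\<exists>t \<le> 10*(q-(Suc j)) + 12. halted prog (run prog A t (5,R')) \<and>
        (snd (run prog A t (5,R')) 0 = 1 \<longleftrightarrow> \<tau> + k + min k (R' 8 + greedy A m (Suc j)) \<le> q)"
        apply (rule 1(2)[OF _ e])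
        using True 1 r7 rr by simp_all
      then obtain t where t: "t \<le> 10*(q-(Suc j)) + 12" "halted prog (run prog A t (5,R'))"
        "(snd (run prog A t (5,R')) 0 = 1 \<longleftrightarrow> \<tau> + k + min k (R' 8 + greedy A m (Suc j)) \<le> q)"
        by blast
      show ?thesis
        apply (intro exI[of _ "9 + t"])
        using t True g r r8 unfolding run_add by simp
    qed
  qed
qed




lemma prog_correct:
  assumes "length A = q" "0 < \<tau>" "0 < k"
  shows "\<exists>t \<le> 40*(\<tau>+k). halted prog (run prog A t (init \<tau> k m q n)) \<and>
     (snd (run prog A t (init \<tau> k m q n)) 0 = 1 \<longleftrightarrow>
        (m = 0 \<and> \<tau> \<le> q) \<or> (0 < m \<and> \<tau> + k + min k (greedy A m 0) \<le> q))"
proof (cases "m = 0")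
  case True
  have "halted prog (run prog A 5 (init \<tau> k m q n)) \<and>
     (snd (run prog A 5 (init \<tau> k m q n)) 0 = 1 \<longleftrightarrow> \<tau> \<le> q)"
    using True by (simp add: init_def run_num run_Suc steps h25 h27)
  then show ?thesis using True assms by (intro exI[of _ 5]) auto
next
  case m: False
  show ?thesis
  proof (cases "\<tau> + 2*k \<le> q")
    case True
    have "halted prog (run prog A 5 (init \<tau> k m q n)) \<and>
       snd (run prog A 5 (init \<tau> k m q n)) 0 = 1"
      using True m by (simp add: init_def run_num run_Suc steps h25 h27)
    moreover have "\<tau> + k + min k (greedy A m 0) \<le> q" using True by linarith
    ultimately show ?thesis using m assms by (intro exI[of _ 5]) auto
  next
    case False
    define R' where "R' = snd (run prog A 5 (init \<tau> k m q n))"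
    have r: "run prog A 5 (init \<tau> k m q n) = (5, R')" and rr: "R' 0 = \<tau>" "R' 1 = k" "R' 2 = m" "R' 3 = q"
      "R' 5 = 0" "R' 9 = 1" "R' 7 = 0" "R' 8 = 0"
      using False m unfolding R'_def by (simp_all add: init_def run_num run_Suc steps)
    obtain t where t: "t \<le> 10*(q-0) + 12" "halted prog (run prog A t (5,R'))"
        "(snd (run prog A t (5,R')) 0 = 1 \<longleftrightarrow> \<tau> + k + min k (R' 8 + greedy A m 0) \<le> q)"
      using loop[OF assms(1) rr(1-7)] by blast
    show ?thesis
      apply (intro exI[of _ "5 + t"])
      using t r rr m False assms unfolding run_add by auto
  qed
qed




lemma greedy_upper:
  "finite E \<Longrightarrow> E \<subseteq> {j..} \<Longrightarrow> \<forall>i\<in>E. Suc i < length A \<and> A!(Suc i) < A!i + m \<Longrightarrow>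
   \<forall>i\<in>E. Suc i \<notin> E \<Longrightarrow> card E \<le> greedy A m j"
proof (induction A m j arbitrary: E rule: greedy.induct)
  case (1 A m j)
  show ?case
  proof (cases "Suc j < length A")
    case False
    have "E = {}"
    proof (rule ccontr)
      assume "E \<noteq> {}" then obtain i where "i \<in> E" by blast
      then have "j \<le> i" "Suc i < length A" using 1(4,5) by auto
      then show False using False by simp
    qed
    then show ?thesis by simp
  next
    case True
    show ?thesis
    proof (cases "A!(Suc j) < A!j + m")
      case e: True
      have g: "greedy A m j = Suc (greedy A m (j+2))" using True e by (subst greedy.simps) simp
      define E' where "E' = E - {j, Suc j}"
      have "card E' \<le> greedy A m (j+2)"
        apply (rule 1(1)[OF True e])
        using 1(3-6) unfolding E'_def by auto
      moreover have "card E \<le> Suc (card E')"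
      proof (cases "j \<in> E")
        case True
        have fE': "finite E'" using 1(3) unfolding E'_def by simp
        have "Suc j \<notin> E" using 1(6) True by auto
        then have Ei: "E = insert j E'" using True unfolding E'_def by auto
        have "card (insert j E') \<le> Suc (card E')" using fE' by (simp add: card_insert_if)
        then show ?thesis using Ei by simp
      next
        case False
        have fE': "finite E'" using 1(3) unfolding E'_def by simp
        from False have "E \<subseteq> insert (Suc j) E'" unfolding E'_def by auto
        then have "card E \<le> card (insert (Suc j) E')"
          by (rule card_mono[rotated]) (use 1(3) E'_def in auto)
        also have "\<dots> \<le> Suc (card E')" using fE' by (simp add: card_insert_if)
        finally show ?thesis .
      qed
      ultimately show ?thesis using g by simp
    next
      case e: False
      have g: "greedy A m j = greedy A m (Suc j)" using True e by (subst greedy.simps) simp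
      have "j \<notin> E" using 1(5) e by auto
      then have "E \<subseteq> {Suc j..}" using 1(4) by (auto simp: Suc_le_eq order_le_less)
      then show ?thesis using 1(2)[OF True e] 1(3,5,6) g by simp
    qed
  qed
qed

lemma greedy_set:
  "\<exists>G. finite G \<and> G \<subseteq> {j..} \<and> (\<forall>i\<in>G. Suc i < length A \<and> A!(Suc i) < A!i + m) \<and>
     (\<forall>i\<in>G. Suc i \<notin> G) \<and> card G = greedy A m j"
proof (induction A m j rule: greedy.induct)
  case (1 A m j)
  show ?case
  proof (cases "Suc j < length A")
    case False
    then show ?thesis by (intro exI[of _ "{}"]) (subst greedy.simps, simp)
  next
    case True
    show ?thesis
    proof (cases "A!(Suc j) < A!j + m")
      case e: True
      have g: "greedy A m j = Suc (greedy A m (j+2))" using True e by (subst greedy.simps) simp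
      obtain G where G: "finite G" "G \<subseteq> {j+2..}" "\<forall>i\<in>G. Suc i < length A \<and> A!(Suc i) < A!i + m"
        "\<forall>i\<in>G. Suc i \<notin> G" "card G = greedy A m (j+2)" using 1(1)[OF True e] by blast
      have "j \<notin> G" using G(2) by auto
      show ?thesis
        apply (intro exI[of _ "insert j G"])
        using G True e g \<open>j \<notin> G\<close> by auto
    next
      case e: False
      have g: "greedy A m j = greedy A m (Suc j)" using True e by (subst greedy.simps) simp
      obtain G where G: "finite G" "G \<subseteq> {Suc j..}" "\<forall>i\<in>G. Suc i < length A \<and> A!(Suc i) < A!i + m"
        "\<forall>i\<in>G. Suc i \<notin> G" "card G = greedy A m (Suc j)" using 1(2)[OF True e] by blast
      show ?thesis
        apply (intro exI[of _ G])
        using G g by auto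
    qed
  qed
qed

lemma occs_iff: "x \<in> occs S P \<longleftrightarrow> x + length P \<le> length S \<and> (\<forall>t<length P. S!(x+t) = P!t)"
proof -
  have "take (length P) (drop x S) = P \<longleftrightarrow> (\<forall>t<length P. S!(x+t) = P!t)" if "x + length P \<le> length S"
    using that by (auto simp: list_eq_iff_nth_eq)
  then show ?thesis unfolding occs_def by auto
qed

lemma finite_occs: "finite (occs S P)"
proof -
  have "occs S P \<subseteq> {0..length S}" unfolding occs_def by auto
  then show ?thesis using finite_subset by blast
qed

lemma length_mask[simp]: "length (mask S D) = length S" by (simp add: mask_def)
lemma nth_mask: "i < length S \<Longrightarrow> mask S D ! i = (if i \<in> D then None else Some (S!i))"
  by (simp add: mask_def)

lemma mask_occs:
  "occs (mask S D) (map Some P) = {x \<in> occs S P. \<forall>p\<in>D. \<not> (x \<le> p \<and> p < x + length P)}"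
proof -
  have "x \<in> occs (mask S D) (map Some P) \<longleftrightarrow> x \<in> occs S P \<and> (\<forall>p\<in>D. \<not> (x \<le> p \<and> p < x + length P))" for x
  proof -
    have a: "x \<in> occs (mask S D) (map Some P) \<longleftrightarrow> x + length P \<le> length S \<and>
      (\<forall>t<length P. x + t \<notin> D \<and> S!(x+t) = P!t)"
    proof -
      have "(\<forall>t<length P. mask S D ! (x+t) = Some (P!t)) \<longleftrightarrow> (\<forall>t<length P. x + t \<notin> D \<and> S!(x+t) = P!t)"
        if "x + length P \<le> length S"
      proof -
        have "mask S D ! (x+t) = Some (P!t) \<longleftrightarrow> x + t \<notin> D \<and> S!(x+t) = P!t" if "t < length P" for t
          using that \<open>x + length P \<le> length S\<close> by (simp add: nth_mask)
        then show ?thesis by blast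
      qed
      then show ?thesis unfolding occs_iff by auto
    qed
    have b: "(\<forall>t<length P. x + t \<notin> D) \<longleftrightarrow> (\<forall>p\<in>D. \<not> (x \<le> p \<and> p < x + length P))"
    proof
      assume H: "\<forall>t<length P. x + t \<notin> D"
      show "\<forall>p\<in>D. \<not> (x \<le> p \<and> p < x + length P)"
      proof (intro ballI notI)
        fix p assume "p \<in> D" "x \<le> p \<and> p < x + length P"
        moreover from this have "p - x < length P" "x + (p - x) = p" by auto
        ultimately show False using H by metis
      qed
    qed auto
    show ?thesis using a b unfolding occs_iff by blast
  qed
  then show ?thesis by blast
qed

lemma per_le:
  assumes "x \<in> occs S P" "y \<in> occs S P" "x < y" "y < x + length P"
  shows "per P \<le> y - x"
proof -
  have "is_period P (y - x)"
    unfolding is_period_def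
  proof (intro conjI allI impI)
    show "0 < y - x" using assms by simp
    fix t assume t: "t + (y - x) < length P"
    have "P!t = S!(y+t)" using assms(2) t unfolding occs_iff by auto
    moreover have "P!(t + (y-x)) = S!(x + (t + (y - x)))" using assms(1) t unfolding occs_iff by auto
    moreover have "x + (t + (y - x)) = y + t" using assms by simp
    ultimately show "P ! t = P ! (t + (y - x))" by (metis add.commute)
  qed
  then show ?thesis unfolding per_def by (rule Least_le)
qed

context
  fixes S P :: "'a list" and A :: "nat list"
  assumes A: "A = sorted_list_of_set (occs S P)"
begin

lemma lenA: "length A = card (occs S P)" by (simp add: A finite_occs)
lemma distA: "distinct A" using A by simp
lemma setA: "set A = occs S P" by (simp add: A finite_occs)
lemma Aless: "i < j \<Longrightarrow> j < length A \<Longrightarrow> A!i < A!j"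
  using A sorted_wrt_nth_less[OF strict_sorted_list_of_set] by metis
lemma Aocc: "i < length A \<Longrightarrow> A!i \<in> occs S P" using setA nth_mem by blast
lemma Abound: "i < length A \<Longrightarrow> A!i + length P \<le> length S" using Aocc occs_iff by blast

lemma three:
  assumes ap: "aperiodic P" and "i < i'" "i' < length A" "Suc i < i'" "A!i' < A!i + length P"
  shows False
proof -
  have 1: "A!i < A!(Suc i)" "A!(Suc i) < A!i'" using Aless assms by auto
  have "per P \<le> A!(Suc i) - A!i"
    by (rule per_le[where S=S]) (use 1 assms Aocc in auto)
  moreover have "per P \<le> A!i' - A!(Suc i)"
    by (rule per_le[where S=S]) (use 1 assms Aocc in auto)
  ultimately have "2 * per P \<le> A!i' - A!i" using 1 by linarith
  then show False using ap assms(5) unfolding aperiodic_def by linarith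
qed

definition hit :: "nat set \<Rightarrow> nat set" where
  "hit D = {i. i < length A \<and> (\<exists>p\<in>D. A!i \<le> p \<and> p < A!i + length P)}"

lemma hit_sub: "hit D \<subseteq> {..<length A}" unfolding hit_def by auto
lemma hit_fin: "finite (hit D)" using hit_sub finite_subset by blast

lemma survivors: "card (occs (mask S D) (map Some P)) = length A - card (hit D)"
proof -
  have "occs (mask S D) (map Some P) = (nth A) ` ({..<length A} - hit D)"
  proof
    show "occs (mask S D) (map Some P) \<subseteq> (nth A) ` ({..<length A} - hit D)"
    proof
      fix x assume "x \<in> occs (mask S D) (map Some P)"
      then have x: "x \<in> occs S P" "\<forall>p\<in>D. \<not> (x \<le> p \<and> p < x + length P)" unfolding mask_occs by auto
      then obtain i where i: "i < length A" "x = A!i" using setA by (metis in_set_conv_nth)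
      then have "i \<notin> hit D" using x unfolding hit_def by auto
      then show "x \<in> (nth A) ` ({..<length A} - hit D)" using i by auto
    qed
  next
    show "(nth A) ` ({..<length A} - hit D) \<subseteq> occs (mask S D) (map Some P)"
      unfolding mask_occs hit_def using Aocc by auto
  qed
  moreover have "inj_on (nth A) ({..<length A} - hit D)" using inj_on_nth distA by fastforce
  ultimately have "card (occs (mask S D) (map Some P)) = card ({..<length A} - hit D)"
    by (simp add: card_image)
  also have "\<dots> = length A - card (hit D)" using hit_sub hit_fin by (simp add: card_Diff_subset)
  finally show ?thesis .
qed

lemma hitI: "i < length A \<Longrightarrow> p \<in> D \<Longrightarrow> A!i \<le> p \<Longrightarrow> p < A!i + length P \<Longrightarrow> i \<in> hit D"
  unfolding hit_def by blast

lemma hit_empty: "length P = 0 \<Longrightarrow> hit D = {}" unfolding hit_def by auto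

lemma upper:
  assumes ap: "aperiodic P" and fD: "finite D"
  shows "card (hit D) \<le> card D + min (card D) (greedy A (length P) 0)"
proof -
  define m where "m = length P"
  define h where "h i = (SOME p. p \<in> D \<and> A!i \<le> p \<and> p < A!i + m)" for i
  have hX: "h i \<in> D \<and> A!i \<le> h i \<and> h i < A!i + m" if "i \<in> hit D" for i
  proof -
    have "\<exists>p. p \<in> D \<and> A!i \<le> p \<and> p < A!i + m" using that unfolding hit_def m_def by auto
    then show ?thesis unfolding h_def by (rule someI_ex)
  qed
  have hl: "i < length A" if "i \<in> hit D" for i using that unfolding hit_def by auto
  have F: "i' = Suc i" if "i \<in> hit D" "i' \<in> hit D" "i < i'" "h i = h i'" for i i'
  proof (rule ccontr)
    assume "i' \<noteq> Suc i"
    then have "Suc i < i'" using that by auto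
    moreover have "A!i' < A!i + length P" using hX[OF that(1)] hX[OF that(2)] that(4) m_def by auto
    ultimately show False using three[OF ap that(3) hl[OF that(2)]] by blast
  qed
  define E where "E = {i \<in> hit D. Suc i \<in> hit D \<and> h i = h (Suc i)}"
  have Esub: "E \<subseteq> hit D" unfolding E_def by auto
  have fE: "finite E" using Esub hit_fin finite_subset by blast
  have E1: "card E \<le> greedy A m 0"
  proof (rule greedy_upper[OF fE])
    show "E \<subseteq> {0..}" by auto
    show "\<forall>i\<in>E. Suc i < length A \<and> A ! Suc i < A ! i + m"
    proof
      fix i assume i: "i \<in> E"
      then have "Suc i \<in> hit D" "h i = h (Suc i)" "i \<in> hit D" unfolding E_def by auto
      then show "Suc i < length A \<and> A ! Suc i < A ! i + m" using hX[of i] hX[of "Suc i"] hl[of "Suc i"] by auto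
    qed
    show "\<forall>i\<in>E. Suc i \<notin> E"
    proof (intro ballI notI)
      fix i assume "i \<in> E" "Suc i \<in> E"
      then have "i \<in> hit D" "Suc (Suc i) \<in> hit D" "h i = h (Suc (Suc i))" unfolding E_def by auto
      then show False using F[of i "Suc (Suc i)"] by simp
    qed
  qed
  have injE: "inj_on h E"
  proof (rule inj_onI)
    have *: False if "i \<in> E" "i' \<in> E" "i < i'" "h i = h i'" for i i'
    proof -
      have "i' = Suc i" by (rule F) (use that Esub in auto)
      then have "Suc (Suc i) \<in> hit D" "h (Suc (Suc i)) = h i" "i \<in> hit D"
        using that unfolding E_def by auto
      then show False using F[of i "Suc (Suc i)"] by simp
    qed
    fix i i' assume "i \<in> E" "i' \<in> E" "h i = h i'"
    then show "i = i'" using *[of i i'] *[of i' i] by (metis linorder_neqE_nat)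
  qed
  have "h ` E \<subseteq> D" by (rule image_subsetI) (use hX Esub in blast)
  then have E2: "card E \<le> card D" using card_image[OF injE] card_mono[OF fD] by metis
  have injR: "inj_on h (hit D - Suc ` E)"
  proof (rule inj_onI)
    have *: False if "i \<in> hit D - Suc ` E" "i' \<in> hit D - Suc ` E" "i < i'" "h i = h i'" for i i'
    proof -
      have "i' = Suc i" by (rule F) (use that in auto)
      then have "i \<in> E" using that unfolding E_def by auto
      then show False using that \<open>i' = Suc i\<close> by auto
    qed
    fix i i' assume "i \<in> hit D - Suc ` E" "i' \<in> hit D - Suc ` E" "h i = h i'"
    then show "i = i'" using *[of i i'] *[of i' i] by (metis linorder_neqE_nat)
  qed
  have "h ` (hit D - Suc ` E) \<subseteq> D" by (rule image_subsetI) (use hX in blast)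
  then have R2: "card (hit D - Suc ` E) \<le> card D" using card_image[OF injR] card_mono[OF fD] by metis
  have "hit D \<subseteq> (hit D - Suc ` E) \<union> Suc ` E" by auto
  then have "card (hit D) \<le> card ((hit D - Suc ` E) \<union> Suc ` E)"
    by (rule card_mono[rotated]) (use fE hit_fin in auto)
  also have "\<dots> \<le> card (hit D - Suc ` E) + card (Suc ` E)" by (rule card_Un_le)
  also have "\<dots> \<le> card (hit D - Suc ` E) + card E" using card_image_le[OF fE] by simp
  finally show ?thesis using E1 E2 R2 m_def by simp
qed

lemma lower:
  assumes m: "0 < length P"
  shows "\<exists>D \<subseteq> {0..<length S}. card D \<le> k \<and>
           min (length A) (k + min k (greedy A (length P) 0)) \<le> card (hit D)"
proof -
  define q where "q = length A"
  obtain G where G: "finite G" "\<forall>i\<in>G. Suc i < length A \<and> A!(Suc i) < A!i + length P"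
     "\<forall>i\<in>G. Suc i \<notin> G" "card G = greedy A (length P) 0"
    using greedy_set[where j=0 and A=A and m="length P"] by blast
  define j0 where "j0 = min k (greedy A (length P) 0)"
  obtain G' where G': "G' \<subseteq> G" "card G' = j0" "finite G'"
    using obtain_subset_with_card_n[of j0 G] G(4) unfolding j0_def by auto
  define C where "C = G' \<union> Suc ` G'"
  have disj: "G' \<inter> Suc ` G' = {}"
  proof (rule ccontr)
    assume "\<not> ?thesis"
    then obtain i where "i \<in> G'" "Suc i \<in> G'" by blast
    then show False using G'(1) G(3) by blast
  qed
  have cS: "card (Suc ` G') = j0" using G' by (simp add: card_image)
  have cC: "card C = 2 * j0" unfolding C_def using card_Un_disjoint[OF G'(3) _ disj] cS G' by simp
  have Gl: "\<And>i. i \<in> G' \<Longrightarrow> Suc i < length A" using G'(1) G(2) by blast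
  have Csub: "C \<subseteq> {..<q}" unfolding C_def q_def using Gl by (auto dest: Suc_lessD)
  have fC: "finite C" using Csub finite_subset by blast
  have "card C \<le> q" using card_mono[OF _ Csub] by simp
  then have j0q: "2 * j0 \<le> q" using cC by simp
  define Rm where "Rm = {..<q} - C"
  have cRm: "card Rm = q - 2 * j0" unfolding Rm_def using Csub fC cC by (simp add: card_Diff_subset)
  obtain R' where R': "R' \<subseteq> Rm" "card R' = min (k - j0) (q - 2*j0)" "finite R'"
    using obtain_subset_with_card_n[of "min (k - j0) (q - 2*j0)" Rm] cRm by auto
  define D where "D = (\<lambda>i. A!Suc i) ` G' \<union> (\<lambda>i. A!i) ` R'"
  have "card D \<le> card ((\<lambda>i. A!Suc i) ` G') + card ((\<lambda>i. A!i) ` R')" unfolding D_def by (rule card_Un_le)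
  also have "\<dots> \<le> card G' + card R'" using card_image_le[OF G'(3), of "\<lambda>i. A!Suc i"] card_image_le[OF R'(3), of "\<lambda>i. A!i"] by linarith
  finally have cD: "card D \<le> k" using G'(2) R'(2) j0_def by linarith
  have Dsub: "D \<subseteq> {0..<length S}"
  proof
    fix p assume "p \<in> D"
    have "\<exists>i. i < length A \<and> p = A!i"
    proof -
      from \<open>p \<in> D\<close> consider (a) i where "i \<in> G'" "p = A!Suc i" | (b) i where "i \<in> R'" "p = A!i"
        unfolding D_def by blast
      then show ?thesis
      proof cases
        case (a i)
        then have "Suc i < length A" using G'(1) G(2) by blast
        then show ?thesis using a by blast
      next
        case (b i)
        then have "i < length A" using R'(1) unfolding Rm_def q_def by blast
        then show ?thesis using b by blast
      qed
    qed
    then obtain i where "i < length A" "p = A!i" by blast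
    then have "p + length P \<le> length S" using Abound by simp
    then have "p < length S" using m by linarith
    then show "p \<in> {0..<length S}" by simp
  qed
  have "C \<union> R' \<subseteq> hit D"
  proof
    fix i assume "i \<in> C \<union> R'"
    then consider (a) "i \<in> G'" | (b) "i \<in> Suc ` G'" | (c) "i \<in> R'" unfolding C_def by auto
    then show "i \<in> hit D"
    proof cases
      case a
      then have 1: "Suc i < length A" "A!(Suc i) < A!i + length P" using G'(1) G(2) by blast+
      have 2: "A!Suc i \<in> D" unfolding D_def using a by blast
      have "A!i \<le> A!Suc i" using Aless[of i "Suc i"] 1 by simp
      then show ?thesis using hitI[OF _ 2] 1 by simp
    next
      case b
      then obtain i0 where "i0 \<in> G'" "i = Suc i0" by auto
      have 1: "Suc i0 < length A" using \<open>i0 \<in> G'\<close> G'(1) G(2) by blast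
      have 2: "A!Suc i0 \<in> D" unfolding D_def using \<open>i0 \<in> G'\<close> by blast
      show ?thesis using hitI[OF 1 2] \<open>i = Suc i0\<close> m by simp
    next
      case c
      have 1: "i < length A" using c R'(1) unfolding Rm_def q_def by blast
      have 2: "A!i \<in> D" unfolding D_def using c by blast
      show ?thesis using hitI[OF 1 2] m by simp
    qed
  qed
  then have "card (C \<union> R') \<le> card (hit D)" using hit_fin card_mono by blast
  moreover have "C \<inter> R' = {}" using R' Rm_def by auto
  then have "card (C \<union> R') = 2 * j0 + min (k - j0) (q - 2*j0)"
    using card_Un_disjoint[OF fC R'(3)] cC R' by simp
  ultimately have "min q (k + j0) \<le> card (hit D)" using j0q j0_def by linarith
  then show ?thesis using cD Dsub unfolding q_def j0_def by blast
qed

lemma resil_iff: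
  assumes ap: "aperiodic P" and tau: "0 < \<tau>"
  shows "resilient \<tau> k S P \<longleftrightarrow>
    (length P = 0 \<and> \<tau> \<le> length A) \<or> (0 < length P \<and> \<tau> + k + min k (greedy A (length P) 0) \<le> length A)"
proof
  assume R: "resilient \<tau> k S P"
  show "(length P = 0 \<and> \<tau> \<le> length A) \<or> (0 < length P \<and> \<tau> + k + min k (greedy A (length P) 0) \<le> length A)"
  proof (cases "length P = 0")
    case True
    have Rd: "\<And>D. D \<subseteq> {0..<length S} \<Longrightarrow> card D \<le> k \<Longrightarrow> \<tau> \<le> card (occs (mask S D) (map Some P))"
      using R unfolding resilient_def by blast
    have "\<tau> \<le> card (occs (mask S {}) (map Some P))" by (rule Rd) simp_all
    then show ?thesis using True survivors[of "{}"] hit_empty by simp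
  next
    case False
    show ?thesis
    proof (rule ccontr)
      assume "\<not> ?thesis"
      then have lt: "length A < \<tau> + k + min k (greedy A (length P) 0)" using False by simp
      obtain D where D: "D \<subseteq> {0..<length S}" "card D \<le> k"
        "min (length A) (k + min k (greedy A (length P) 0)) \<le> card (hit D)"
        using lower False by blast
      have Rd: "\<And>D. D \<subseteq> {0..<length S} \<Longrightarrow> card D \<le> k \<Longrightarrow> \<tau> \<le> card (occs (mask S D) (map Some P))"
        using R unfolding resilient_def by blast
      have "\<tau> \<le> card (occs (mask S D) (map Some P))" by (rule Rd) (use D in simp_all)
      then show False using survivors[of D] D(3) lt tau by linarith
    qed
  qed
next
  assume H: "(length P = 0 \<and> \<tau> \<le> length A) \<or> (0 < length P \<and> \<tau> + k + min k (greedy A (length P) 0) \<le> length A)"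
  show "resilient \<tau> k S P"
    unfolding resilient_def
  proof (intro allI impI)
    fix D :: "nat set" assume D: "D \<subseteq> {0..<length S} \<and> card D \<le> k"
    then have fD: "finite D" using finite_subset[of D "{0..<length S}"] by simp
    have u: "card (hit D) \<le> card D + min (card D) (greedy A (length P) 0)" using upper[OF ap fD] .
    have s: "card (occs (mask S D) (map Some P)) = length A - card (hit D)" by (rule survivors)
    show "\<tau> \<le> card (occs (mask S D) (map Some P))"
    proof (cases "length P = 0")
      case True
      then have "hit D = {}" by (rule hit_empty)
      then show ?thesis using s H True by simp
    next
      case False
      then have h2: "\<tau> + k + min k (greedy A (length P) 0) \<le> length A" using H by simp
      have "card D \<le> k" using D by simp
      then have "min (card D) (greedy A (length P) 0) \<le> min k (greedy A (length P) 0)" by (rule min.mono) simp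
      then have "card (hit D) \<le> k + min k (greedy A (length P) 0)" using u D by linarith
      then show ?thesis using s h2 by linarith
    qed
  qed
qed

end



theorem lemma4:
  "\<exists>(prog :: instr list) (c :: nat).
     \<forall>(S :: 'a list) (P :: 'a list) (\<tau> :: nat) (k :: nat).
       sublist P S \<and> aperiodic P \<and> \<tau> > 0 \<and> k > 0 \<longrightarrow>
       (let A = sorted_list_of_set (occs S P);
            cfg0 = init \<tau> k (length P) (card (occs S P)) (length S)
        in \<exists>t \<le> c * (\<tau> + k).
             halted prog (run prog A t cfg0) \<and>
             (snd (run prog A t cfg0) 0 = 1 \<longleftrightarrow> resilient \<tau> k S P))"
proof (intro exI[of _ prog] exI[of _ 40] allI impI)
  fix S P :: "'a list" and \<tau> k :: nat
  assume H: "sublist P S \<and> aperiodic P \<and> \<tau> > 0 \<and> k > 0"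
  define A where "A = sorted_list_of_set (occs S P)"
  have len: "length A = card (occs S P)" using lenA[OF A_def] .
  obtain t where t: "t \<le> 40*(\<tau>+k)" "halted prog (run prog A t (init \<tau> k (length P) (card (occs S P)) (length S)))"
     "(snd (run prog A t (init \<tau> k (length P) (card (occs S P)) (length S))) 0 = 1 \<longleftrightarrow>
        (length P = 0 \<and> \<tau> \<le> card (occs S P)) \<or> (0 < length P \<and> \<tau> + k + min k (greedy A (length P) 0) \<le> card (occs S P)))"
    using prog_correct[OF len, of \<tau> k "length P" "length S"] H by blast
  have r: "resilient \<tau> k S P \<longleftrightarrow>
    (length P = 0 \<and> \<tau> \<le> length A) \<or> (0 < length P \<and> \<tau> + k + min k (greedy A (length P) 0) \<le> length A)"
    using resil_iff[OF A_def] H by blast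
  show "let A = sorted_list_of_set (occs S P);
            cfg0 = init \<tau> k (length P) (card (occs S P)) (length S)
        in \<exists>t \<le> 40 * (\<tau> + k).
             halted prog (run prog A t cfg0) \<and>
             (snd (run prog A t cfg0) 0 = 1 \<longleftrightarrow> resilient \<tau> k S P)"
    unfolding Let_def A_def[symmetric] using t r len by auto
qed

end
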